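(* Let $q$ be a prime power, $u,v$ non-zero in $\mathbb{F}_q$, and write $\mathrm{Rad}(q-1)=k\,p_1\cdots p_s$ with $k$ a divisor and $p_1,\ldots,p_s$ distinct primes. Let $\delta_2=1-2\sum_{i=1}^s 1/p_i$ and $M=M_{q-1,q-1}$. Then $$M\geq \sum_{i=1}^s\{[M_{p_ik,k}-\theta(p_i)M_{k,k}]+[M_{k,p_ik}-\theta(p_i)M_{k,k}]\}+\delta_2M_{k,k}.$$
   Context: $\mathrm{Rad}(m)$ is the product of the distinct primes dividing $m$; $\theta(m)=\phi(m)/m$. For a divisor $e$ of $q-1$, a non-zero $a\in\mathbb{F}_q$ is $e$-free if $a=b^d$ with $b\in\mathbb{F}_q$, $d\mid e$ implies $d=1$ (primitive means $(q-1)$-free). For divisors $e_1,e_2$ of $q-1$, $M_{e_1,e_2}$ is the number of non-zero $a\in\mathbb{F}_q$ such that $a$ is $e_1$-free and $ua+va^{-1}$ is (non-zero and) $e_2$-free; thus $M_{q-1,q-1}$ is the number of primitive $a$ with $ua+va^{-1}$ primitive. *)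

theory Defs
  imports "HOL-Number_Theory.Number_Theory" "HOL-Library.Cardinality"
begin

definition Rad :: "nat \<Rightarrow> nat" where
  "Rad m = (\<Prod>p\<in>prime_factors m. p)"

definition theta :: "nat \<Rightarrow> real" where
  "theta m = real (totient m) / real m"

definition efree :: "nat \<Rightarrow> 'a::{finite,field} \<Rightarrow> bool" where
  "efree e a \<longleftrightarrow> a \<noteq> 0 \<and> (\<forall>b d. d dvd e \<and> a = b ^ d \<longrightarrow> d = 1)"

definition Mcount :: "'a::{finite,field} \<Rightarrow> 'a \<Rightarrow> nat \<Rightarrow> nat \<Rightarrow> nat" where
  "Mcount u v e1 e2 = card {a::'a. a \<noteq> 0 \<and> efree e1 a \<and> efree e2 (u * a + v * inverse a)}"

end

theory Submission
  imports Defs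
begin

lemma efree_iff:
  "efree e a \<longleftrightarrow> a \<noteq> 0 \<and> (\<forall>p. prime p \<and> p dvd e \<longrightarrow> (\<forall>b. a \<noteq> b ^ p))"
proof
  assume h: "efree e a"
  then show "a \<noteq> 0 \<and> (\<forall>p. prime p \<and> p dvd e \<longrightarrow> (\<forall>b. a \<noteq> b ^ p))"
    unfolding efree_def by (metis not_prime_1)
next
  assume h: "a \<noteq> 0 \<and> (\<forall>p. prime p \<and> p dvd e \<longrightarrow> (\<forall>b. a \<noteq> b ^ p))"
  have "d = 1" if "d dvd e" "a = b ^ d" for b d
  proof (rule ccontr)
    assume "d \<noteq> 1"
    then obtain p where p: "prime p" "p dvd d" using prime_factor_nat by blast
    then obtain m where m: "d = p * m" by blast
    have "a = (b ^ m) ^ p" using that(2) m by (simp add: power_mult mult.commute)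
    moreover have "p dvd e" using p that(1) dvd_trans by blast
    ultimately show False using h p by blast
  qed
  then show "efree e a" using h unfolding efree_def by blast
qed

lemma prime_dvd_Rad:
  assumes "n > 0" "prime (p::nat)"
  shows "p dvd Rad n \<longleftrightarrow> p dvd n"
proof -
  have "p dvd Rad n \<longleftrightarrow> (\<exists>q\<in>prime_factors n. p dvd q)"
    unfolding Rad_def using assms(2) by (simp add: prime_dvd_prod_iff)
  also have "\<dots> \<longleftrightarrow> p \<in> prime_factors n"
    using assms(2) by (metis in_prime_factors_imp_prime primes_dvd_imp_eq dvd_refl)
  also have "\<dots> \<longleftrightarrow> p dvd n" using assms by (auto simp: in_prime_factors_iff)
  finally show ?thesis .
qed

theorem lemma6p2:
  fixes u v :: "'a::{finite,field}" and k :: nat and P :: "nat set"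
  assumes "u \<noteq> 0" and "v \<noteq> 0"
    and "finite P" and "\<forall>p\<in>P. prime p"
    and "Rad (CARD('a) - 1) = k * (\<Prod>p\<in>P. p)"
  shows "real (Mcount u v (CARD('a) - 1) (CARD('a) - 1)) \<ge>
     (\<Sum>p\<in>P. (real (Mcount u v (p * k) k) - theta p * real (Mcount u v k k))
             + (real (Mcount u v k (p * k)) - theta p * real (Mcount u v k k)))
     + (1 - 2 * (\<Sum>p\<in>P. 1 / real p)) * real (Mcount u v k k)"
proof -
  define n where "n = CARD('a) - 1"
  define w where "w a = u * a + v * inverse a" for a :: 'a
  define U where "U = {a::'a. a \<noteq> 0 \<and> efree k a \<and> efree k (w a)}"
  define X where "X p = {a\<in>U. \<exists>b. a = b ^ p}" for p :: nat
  define Y where "Y p = {a\<in>U. \<exists>b. w a = b ^ p}" for p :: nat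
  have "card {0::'a, 1} \<le> CARD('a)" by (rule card_mono) auto
  then have card2: "CARD('a) \<ge> 2" by simp
  then have npos: "n > 0" unfolding n_def by simp
  have dvd_n: "q dvd n \<longleftrightarrow> q dvd k \<or> q \<in> P" if "prime q" for q :: nat
  proof -
    have "q dvd n \<longleftrightarrow> q dvd k * (\<Prod>p\<in>P. p)"
      using prime_dvd_Rad[OF npos that] assms(5) unfolding n_def by simp
    also have "\<dots> \<longleftrightarrow> q dvd k \<or> (\<exists>p\<in>P. q dvd p)"
      using that assms(3) by (simp add: prime_dvd_mult_iff prime_dvd_prod_iff)
    also have "(\<exists>p\<in>P. q dvd p) \<longleftrightarrow> q \<in> P"
      using that assms(4) by (metis primes_dvd_imp_eq dvd_refl)
    finally show ?thesis .
  qed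
  have dvd_pk: "q dvd p * k \<longleftrightarrow> q = p \<or> q dvd k" if "prime q" "prime p" for q p :: nat
    using that by (metis prime_dvd_mult_iff primes_dvd_imp_eq dvd_refl)
  have epk: "efree (p*k) a \<longleftrightarrow> efree k a \<and> (\<forall>b. a \<noteq> b ^ p)" if "prime p" for p and a :: 'a
    unfolding efree_iff using dvd_pk[OF _ that] that by blast
  have en: "efree n a \<longleftrightarrow> efree k a \<and> (\<forall>p\<in>P. \<forall>b. a \<noteq> b ^ p)" for a :: 'a
    unfolding efree_iff using dvd_n assms(4) by blast
  have fin: "finite A" for A :: "'a set" by simp
  have MU: "Mcount u v k k = card U" unfolding Mcount_def U_def w_def by simp
  have MX: "Mcount u v (p * k) k = card (U - X p)" if "p \<in> P" for p
  proof -
    have "prime p" using that assms(4) by blast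
    then have "{a::'a. a \<noteq> 0 \<and> efree (p*k) a \<and> efree k (u * a + v * inverse a)} = U - X p"
      unfolding U_def X_def w_def by (simp add: epk[OF \<open>prime p\<close>] set_eq_iff) blast
    then show ?thesis unfolding Mcount_def by simp
  qed
  have MY: "Mcount u v k (p * k) = card (U - Y p)" if "p \<in> P" for p
  proof -
    have "prime p" using that assms(4) by blast
    then have "{a::'a. a \<noteq> 0 \<and> efree k a \<and> efree (p*k) (u * a + v * inverse a)} = U - Y p"
      unfolding U_def Y_def w_def by (simp add: epk[OF \<open>prime p\<close>] set_eq_iff) blast
    then show ?thesis unfolding Mcount_def by simp
  qed
  define B where "B = (\<Union>p\<in>P. X p \<union> Y p)"
  have MM: "Mcount u v n n = card (U - B)"
  proof -
    have "{a::'a. a \<noteq> 0 \<and> efree n a \<and> efree n (u * a + v * inverse a)} = U - B"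
      unfolding U_def B_def X_def Y_def w_def by (simp add: en set_eq_iff) blast
    then show ?thesis unfolding Mcount_def by simp
  qed
  have BU: "B \<subseteq> U" unfolding B_def X_def Y_def by auto
  have cB: "card B \<le> (\<Sum>p\<in>P. card (X p) + card (Y p))"
  proof -
    have "card B \<le> (\<Sum>p\<in>P. card (X p \<union> Y p))" unfolding B_def by (rule card_UN_le[OF assms(3)])
    also have "\<dots> \<le> (\<Sum>p\<in>P. card (X p) + card (Y p))"
      by (rule sum_mono) (simp add: card_Un_le)
    finally show ?thesis .
  qed
  have cUB: "real (card (U - B)) = real (card U) - real (card B)"
    using BU by (simp add: card_Diff_subset of_nat_diff card_mono)
  have cX: "real (card (U - X p)) = real (card U) - real (card (X p))" for p
    by (simp add: X_def card_Diff_subset of_nat_diff card_mono)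
  have cY: "real (card (U - Y p)) = real (card U) - real (card (Y p))" for p
    by (simp add: Y_def card_Diff_subset of_nat_diff card_mono)
  have th: "theta p = 1 - 1 / real p" if "p \<in> P" for p
  proof -
    have "prime p" using that assms(4) by blast
    then have "p > 0" using prime_gt_0_nat by blast
    then show ?thesis using \<open>prime p\<close> unfolding theta_def
      by (simp add: totient_prime field_simps of_nat_diff prime_ge_1_nat)
  qed
  have "(\<Sum>p\<in>P. (real (Mcount u v (p * k) k) - theta p * real (Mcount u v k k))
             + (real (Mcount u v k (p * k)) - theta p * real (Mcount u v k k)))
      = (\<Sum>p\<in>P. 2 * real (card U) * (1 / real p) - real (card (X p)) - real (card (Y p)))"
    by (rule sum.cong) (auto simp: MX MY MU cX cY th algebra_simps)
  also have "\<dots> = 2 * real (card U) * (\<Sum>p\<in>P. 1 / real p) - (\<Sum>p\<in>P. real (card (X p)) + real (card (Y p)))"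
    by (simp add: sum_subtractf sum_distrib_left sum.distrib)
  finally have e: "(\<Sum>p\<in>P. (real (Mcount u v (p * k) k) - theta p * real (Mcount u v k k))
             + (real (Mcount u v k (p * k)) - theta p * real (Mcount u v k k)))
      = 2 * real (card U) * (\<Sum>p\<in>P. 1 / real p) - (\<Sum>p\<in>P. real (card (X p)) + real (card (Y p)))" .
  have cB': "real (card B) \<le> (\<Sum>p\<in>P. real (card (X p)) + real (card (Y p)))"
    using cB by (metis (mono_tags, lifting) of_nat_add of_nat_le_iff of_nat_sum sum.cong)
  show ?thesis
    unfolding n_def[symmetric] e MM using cB' cUB MU by (simp add: algebra_simps)
qed

end
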